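(* Let $0\le f\le\lfloor n/2\rfloor$ and $d\in\mathcal D_{\nu_f}$. Suppose $d=d's_j$ for some $1\le j\le n-1$ and $d'\in\mathfrak S_n$ with $\ell(d)=\ell(d')+1$. Then $d'\in\mathcal D_{\nu_f}$.
   Context: $\mathfrak S_n$ acts on $\{1,\dots,n\}$ on the right: $(a)(\sigma\tau)=((a)\sigma)\tau$; $s_j=(j,j+1)$ and $\ell$ is the Coxeter length. For $0\le f\le\lfloor n/2\rfloor$ let $\nu_f=((2^f),(n-2f))$, a bipartition of $n$ (first component $f$ rows of length $2$, second component one row of length $n-2f$), and let $\mathfrak t^{\nu_f}$ be the bitableau with $1,\dots,n$ entered in order along successive rows of the first component and then along the row of the second component. For $d\in\mathfrak S_n$, $\mathfrak t^{\nu_f}d$ is obtained by replacing each entry $a$ by $(a)d$. $\mathcal D_{\nu_f}$ is the set of $d\in\mathfrak S_n$ such that $\mathfrak t^{\nu_f}d$ is row standard (entries increase along each row of each component) and the first column of its first component increases from top to bottom. *)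

theory Defs
  imports "HOL-Combinatorics.Combinatorics"
begin

text \<open>The symmetric group acts on the RIGHT: (a)(sigma tau) = ((a)sigma)tau,
  so the product sigma tau corresponds to the function composition tau o sigma.\<close>

definition rmult :: "(nat \<Rightarrow> nat) \<Rightarrow> (nat \<Rightarrow> nat) \<Rightarrow> (nat \<Rightarrow> nat)" where
  "rmult \<sigma> \<tau> = \<tau> \<circ> \<sigma>"

definition s :: "nat \<Rightarrow> nat \<Rightarrow> nat" where
  "s j = Transposition.transpose j (Suc j)"

fun word_perm :: "nat list \<Rightarrow> nat \<Rightarrow> nat" where
  "word_perm [] = id"
| "word_perm (j # js) = rmult (s j) (word_perm js)"

definition coxeter_length :: "nat \<Rightarrow> (nat \<Rightarrow> nat) \<Rightarrow> nat" where
  "coxeter_length n w =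
     (LEAST k. \<exists>js. length js = k \<and> set js \<subseteq> {1..<n} \<and> word_perm js = w)"

text \<open>Bitableaux: a pair of components, each a list of rows (lists of entries).\<close>
type_synonym bitableau = "nat list list \<times> nat list list"

text \<open>t^{nu_f} for nu_f = ((2^f),(n-2f)).\<close>
definition t_nu :: "nat \<Rightarrow> nat \<Rightarrow> bitableau" where
  "t_nu n f = ([[2*i+1, 2*i+2]. i \<leftarrow> [0..<f]], [[2*f+1..<n+1]])"

definition tab_act :: "bitableau \<Rightarrow> (nat \<Rightarrow> nat) \<Rightarrow> bitableau" where
  "tab_act t d = (map (map d) (fst t), map (map d) (snd t))"

definition row_standard :: "bitableau \<Rightarrow> bool" where
  "row_standard t \<longleftrightarrow> (\<forall>r \<in> set (fst t) \<union> set (snd t). sorted_wrt (<) r)"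

definition first_col_increasing :: "bitableau \<Rightarrow> bool" where
  "first_col_increasing t \<longleftrightarrow> sorted_wrt (<) (map hd (fst t))"

definition D_nu :: "nat \<Rightarrow> nat \<Rightarrow> (nat \<Rightarrow> nat) set" where
  "D_nu n f = {d. d permutes {1..n} \<and> row_standard (tab_act (t_nu n f) d)
                  \<and> first_col_increasing (tab_act (t_nu n f) d)}"

end

theory Submission
  imports Defs
begin

definition invs :: "nat \<Rightarrow> (nat \<Rightarrow> nat) \<Rightarrow> (nat \<times> nat) set" where
  "invs n w = {(a,b). a \<in> {1..n} \<and> b \<in> {1..n} \<and> a < b \<and> w b < w a}"

lemma finite_invs: "finite (invs n w)"
  by (rule finite_subset[of _ "{1..n} \<times> {1..n}"]) (auto simp: invs_def)

lemma s_s[simp]: "s j (s j x) = x"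
  by (simp add: s_def transpose_def)

lemma s_key: "\<not>((x=j \<and> y=Suc j) \<or> (x=Suc j \<and> y=j)) \<Longrightarrow> (s j y < s j x) = (y < x)"
  by (auto simp: s_def transpose_def)

lemma s_j: "s j j = Suc j" "s j (Suc j) = j"
  by (auto simp: s_def)

lemma invs_swap:
  assumes "inj w" "w p = j" "w q = Suc j" "p < q" "p \<in> {1..n}" "q \<in> {1..n}"
  shows "invs n (s j \<circ> w) = insert (p,q) (invs n w)" "(p,q) \<notin> invs n w"
proof -
  show "(p,q) \<notin> invs n w" using assms by (auto simp: invs_def)
  show "invs n (s j \<circ> w) = insert (p,q) (invs n w)"
  proof (rule set_eqI)
    fix x show "x \<in> invs n (s j \<circ> w) \<longleftrightarrow> x \<in> insert (p,q) (invs n w)"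
    proof (cases x)
      case (Pair a b)
      show ?thesis
      proof (cases "a = p \<and> b = q")
        case True thus ?thesis using assms Pair by (auto simp: invs_def s_j)
      next
        case False
        have "\<not>((w a = j \<and> w b = Suc j) \<or> (w a = Suc j \<and> w b = j))" if "a < b"
        proof
          assume h: "(w a = j \<and> w b = Suc j) \<or> (w a = Suc j \<and> w b = j)"
          show False
          proof (cases "w a = j")
            case True
            then have "w b = Suc j" using h by simp
            then have "a = p" "b = q" using True assms(2,3) injD[OF assms(1)] by metis+
            thus False using False by simp
          next
            case F2: False
            then have "w a = Suc j" "w b = j" using h by simp_all
            then have "a = q" "b = p" using assms(2,3) injD[OF assms(1)] by metis+
            thus False using that assms(4) by simp
          qed
        qed
        then have iff: "a < b \<Longrightarrow> (s j (w b) < s j (w a)) = (w b < w a)"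
          using s_key[of "w a" j "w b"] by blast
        have m1: "x \<in> invs n (s j \<circ> w) \<longleftrightarrow> a \<in> {1..n} \<and> b \<in> {1..n} \<and> a < b \<and> s j (w b) < s j (w a)"
          by (simp add: invs_def Pair)
        have m2: "x \<in> insert (p,q) (invs n w) \<longleftrightarrow> a \<in> {1..n} \<and> b \<in> {1..n} \<and> a < b \<and> w b < w a"
          using False by (auto simp: invs_def Pair)
        show ?thesis unfolding m1 m2 using iff by blast
      qed
    qed
  qed
qed

lemma card_invs_up:
  assumes "inj w" "w p = j" "w q = Suc j" "p < q" "p \<in> {1..n}" "q \<in> {1..n}"
  shows "card (invs n (s j \<circ> w)) = Suc (card (invs n w))"
  using invs_swap[OF assms] finite_invs by simp

lemma card_invs_down:
  assumes "inj w" "w p = j" "w q = Suc j" "q < p" "p \<in> {1..n}" "q \<in> {1..n}"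
  shows "Suc (card (invs n (s j \<circ> w))) = card (invs n w)"
proof -
  have i: "inj (s j \<circ> w)" using assms(1)
    by (metis comp_apply injI inj_eq s_s)
  have "card (invs n (s j \<circ> (s j \<circ> w))) = Suc (card (invs n (s j \<circ> w)))"
    by (rule card_invs_up[OF i, of q j p]) (use assms in \<open>auto simp: s_j\<close>)
  moreover have "s j \<circ> (s j \<circ> w) = w" by (auto simp: fun_eq_iff)
  ultimately show ?thesis by simp
qed


lemma word_perm_snoc: "word_perm (xs @ [j]) = s j \<circ> word_perm xs"
  by (induction xs) (auto simp: rmult_def)

lemma s_permutes: "1 \<le> j \<Longrightarrow> j < n \<Longrightarrow> s j permutes {1..n}"
  unfolding s_def by (rule permutes_swap_id) auto

lemma positions:
  assumes "w permutes {1..n}" "1 \<le> j" "j < n"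
  shows "\<exists>p q. p \<in> {1..n} \<and> q \<in> {1..n} \<and> w p = j \<and> w q = Suc j \<and> p \<noteq> q"
proof -
  have iw: "inv w permutes {1..n}" using assms(1) by (rule permutes_inv)
  have "inv w j \<in> {1..n}" "inv w (Suc j) \<in> {1..n}"
    using permutes_in_image[OF iw] assms by auto
  moreover have "w (inv w j) = j" "w (inv w (Suc j)) = Suc j"
    using permutes_inverses(1)[OF assms(1)] by auto
  ultimately show ?thesis by (metis n_not_Suc_n)
qed

lemma invs_le_step:
  assumes "w permutes {1..n}" "1 \<le> j" "j < n"
  shows "card (invs n (s j \<circ> w)) \<le> Suc (card (invs n w))"
proof -
  obtain p q where pq: "p \<in> {1..n}" "q \<in> {1..n}" "w p = j" "w q = Suc j" "p \<noteq> q"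
    using positions[OF assms] by blast
  have i: "inj w" using assms(1) permutes_inj by blast
  show ?thesis
  proof (cases "p < q")
    case True thus ?thesis using card_invs_up[OF i pq(3,4) True pq(1,2)] by simp
  next
    case False then have "q < p" using pq by simp
    thus ?thesis using card_invs_down[OF i pq(3,4) _ pq(1,2)] by simp
  qed
qed

lemma word_lower:
  "set js \<subseteq> {1..<n} \<Longrightarrow> word_perm js permutes {1..n} \<and> card (invs n (word_perm js)) \<le> length js"
proof (induction js rule: rev_induct)
  case Nil
  have "invs n id = {}" by (auto simp: invs_def)
  then show ?case using permutes_id[of "{1..n}"] by (simp add: id_def)
next
  case (snoc j xs)
  then have h: "word_perm xs permutes {1..n}" "card (invs n (word_perm xs)) \<le> length xs"
    "1 \<le> j" "j < n" by auto
  show ?case unfolding word_perm_snoc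
    using permutes_compose[OF h(1) s_permutes[OF h(3,4)]] invs_le_step[OF h(1,3,4)] h(2)
    by (simp del: comp_apply)
qed

lemma no_inv_id:
  assumes "w permutes {1..n}" "invs n w = {}"
  shows "w = id"
proof -
  have i: "inj w" using assms(1) permutes_inj by blast
  have inS: "\<And>a. a \<in> {1..n} \<Longrightarrow> w a \<in> {1..n}" using permutes_in_image[OF assms(1)] by blast
  have mono: "w a < w b" if "a \<in> {1..n}" "b \<in> {1..n}" "a < b" for a b
  proof -
    have "\<not> w b < w a" using assms(2) that unfolding invs_def by blast
    moreover have "w a \<noteq> w b" using i that by (metis inj_eq less_irrefl)
    ultimately show ?thesis by simp
  qed
  have ge: "1 \<le> a \<longrightarrow> a \<le> n \<longrightarrow> a \<le> w a" for a
  proof (induction a)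
    case 0 then show ?case by simp
  next
    case (Suc a)
    show ?case
    proof (cases "a = 0")
      case True then show ?thesis using inS[of 1] by auto
    next
      case False
      then show ?thesis using Suc mono[of a "Suc a"] by auto
    qed
  qed
  have le: "a \<le> n \<Longrightarrow> 1 \<le> a \<Longrightarrow> w a \<le> a" for a
  proof (induction a rule: inc_induct)
    case base then show ?case using inS[of n] by auto
  next
    case (step m)
    then show ?case using mono[of m "Suc m"] by auto
  qed
  show ?thesis
  proof
    fix x show "w x = id x"
    proof (cases "x \<in> {1..n}")
      case True then show ?thesis using ge[of x] le[of x] by auto
    next
      case False then show ?thesis using permutes_not_in[OF assms(1)] by auto
    qed
  qed
qed

lemma descent:
  assumes "w permutes {1..n}" "invs n w \<noteq> {}"
  shows "\<exists>j p q. 1 \<le> j \<and> j < n \<and> p \<in> {1..n} \<and> q \<in> {1..n} \<and> w p = j \<and> w q = Suc j \<and> q < p"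
proof (rule ccontr)
  assume na: "\<not> ?thesis"
  obtain a b where ab: "a \<in> {1..n}" "b \<in> {1..n}" "a < b" "w b < w a"
    using assms(2) unfolding invs_def by auto
  define g where "g = inv w"
  have iw: "g permutes {1..n}" unfolding g_def using assms(1) by (rule permutes_inv)
  have wg: "\<And>x. w (g x) = x" "\<And>x. g (w x) = x"
    using permutes_inverses[OF assms(1)] unfolding g_def by auto
  have gin: "\<And>x. x \<in> {1..n} \<Longrightarrow> g x \<in> {1..n}" using permutes_in_image[OF iw] by blast
  have gi: "inj g" using iw permutes_inj by blast
  have step: "g v < g (Suc v)" if "1 \<le> v" "v < n" for v
  proof -
    have "\<not> g (Suc v) < g v"
    proof
      assume lt: "g (Suc v) < g v"
      have "v \<in> {1..n}" "Suc v \<in> {1..n}" using that by auto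
      then have "g v \<in> {1..n}" "g (Suc v) \<in> {1..n}" using gin by blast+
      then have "\<exists>j p q. 1 \<le> j \<and> j < n \<and> p \<in> {1..n} \<and> q \<in> {1..n} \<and> w p = j \<and> w q = Suc j \<and> q < p"
        using that lt wg(1)[of v] wg(1)[of "Suc v"] by blast
      with na show False by blast
    qed
    moreover have "g v \<noteq> g (Suc v)" using gi by (metis inj_eq n_not_Suc_n)
    ultimately show ?thesis by simp
  qed
  have wa: "w a \<in> {1..n}" "w b \<in> {1..n}" using permutes_in_image[OF assms(1)] ab(1,2) by blast+
  have chain: "w b \<le> m \<longrightarrow> m \<le> w a \<longrightarrow> g (w b) \<le> g m" for m
  proof (induction m)
    case 0 then show ?case by simp
  next
    case (Suc m)
    show ?case
    proof (cases "w b = Suc m")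
      case True then show ?thesis by simp
    next
      case False
      then show ?thesis using Suc step[of m] wa by auto
    qed
  qed
  have "g (w b) \<le> g (w a)" using chain[of "w a"] ab by simp
  then show False using wg ab by simp
qed

lemma word_upper:
  "w permutes {1..n} \<Longrightarrow> \<exists>js. length js = card (invs n w) \<and> set js \<subseteq> {1..<n} \<and> word_perm js = w"
proof (induction "card (invs n w)" arbitrary: w)
  case 0
  then have "invs n w = {}" using finite_invs by simp
  then have "w = id" using no_inv_id 0 by blast
  then show ?case using 0 by (intro exI[of _ "[]"]) simp
next
  case (Suc k)
  then have "invs n w \<noteq> {}" by auto
  then obtain j p q where d: "1 \<le> j" "j < n" "p \<in> {1..n}" "q \<in> {1..n}" "w p = j" "w q = Suc j" "q < p"
    using descent Suc.prems by blast
  have i: "inj w" using Suc.prems permutes_inj by blast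
  define w' where "w' = s j \<circ> w"
  have c: "k = card (invs n w')" using card_invs_down[OF i d(5,6,7,3,4)] Suc.hyps(2) w'_def by simp
  have pw: "w' permutes {1..n}" unfolding w'_def
    using permutes_compose[OF Suc.prems s_permutes[OF d(1,2)]] .
  obtain js where js: "length js = k" "set js \<subseteq> {1..<n}" "word_perm js = w'"
    using Suc.hyps(1)[OF c pw] c by auto
  have "word_perm (js @ [j]) = w" unfolding word_perm_snoc js(3) w'_def by (auto simp: fun_eq_iff)
  then show ?case using js d Suc.hyps(2) by (intro exI[of _ "js @ [j]"]) auto
qed

lemma coxeter_eq:
  assumes "w permutes {1..n}"
  shows "coxeter_length n w = card (invs n w)"
  unfolding coxeter_length_def
proof (rule Least_equality)
  show "\<exists>js. length js = card (invs n w) \<and> set js \<subseteq> {1..<n} \<and> word_perm js = w"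
    using word_upper[OF assms] .
next
  fix y assume "\<exists>js. length js = y \<and> set js \<subseteq> {1..<n} \<and> word_perm js = w"
  then obtain js where "length js = y" "set js \<subseteq> {1..<n}" "word_perm js = w" by blast
  then show "card (invs n w) \<le> y" using word_lower[of js n] by auto
qed

lemma sorted_transfer:
  assumes "\<And>x y. x < y \<Longrightarrow> d x < d y \<Longrightarrow> d' x < d' y"
  shows "sorted_wrt (<) L \<Longrightarrow> sorted_wrt (<) (map d L) \<Longrightarrow> sorted_wrt (<) (map d' L)"
  by (induction L) (auto simp: assms)


theorem lemma5p2:
  fixes n f j :: nat and d d' :: "nat \<Rightarrow> nat"
  assumes "f \<le> n div 2"
    and "d \<in> D_nu n f"
    and "1 \<le> j" and "j \<le> n - 1"
    and "d' permutes {1..n}"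
    and "d = rmult d' (s j)"
    and "coxeter_length n d = coxeter_length n d' + 1"
  shows "d' \<in> D_nu n f"
proof -
  have jn: "j < n" using assms(3,4) by simp
  have dd: "d = s j \<circ> d'" using assms(6) by (simp add: rmult_def)
  have pd: "d permutes {1..n}" unfolding dd
    using permutes_compose[OF assms(5) s_permutes[OF assms(3) jn]] .
  obtain p q where pq: "p \<in> {1..n}" "q \<in> {1..n}" "d' p = j" "d' q = Suc j" "p \<noteq> q"
    using positions[OF assms(5,3) jn] by blast
  have i: "inj d'" using assms(5) permutes_inj by blast
  have pltq: "p < q"
  proof (rule ccontr)
    assume "\<not> p < q" then have "q < p" using pq by simp
    from card_invs_down[OF i pq(3,4) this pq(1,2)]
    have "Suc (card (invs n d)) = card (invs n d')" using dd by simp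
    then show False using assms(7) coxeter_eq[OF pd] coxeter_eq[OF assms(5)] by simp
  qed
  have d'd: "d' x = s j (d x)" for x using dd by simp
  have tr: "d' x < d' y" if "x < y" "d x < d y" for x y
  proof -
    have "\<not> ((d y = j \<and> d x = Suc j) \<or> (d y = Suc j \<and> d x = j))"
    proof
      assume "(d y = j \<and> d x = Suc j) \<or> (d y = Suc j \<and> d x = j)"
      then have "d y = Suc j" "d x = j" using that by auto
      then have "d' y = j" "d' x = Suc j" using d'd s_j by auto
      then have "y = p" "x = q" using pq(3,4) injD[OF i] by metis+
      then show False using that pltq by simp
    qed
    then show ?thesis using s_key[of "d y" j "d x"] that d'd by simp
  qed
  have st: "sorted_wrt (<) (map d L) \<Longrightarrow> sorted_wrt (<) L \<Longrightarrow> sorted_wrt (<) (map d' L)" for L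
    using sorted_transfer[of d d' L] tr by blast
  have hd1: "map hd (map (map g) [[2*i+1, 2*i+2]. i \<leftarrow> [0..<f]]) = map g (map (\<lambda>i. 2*i+1) [0..<f])"
    for g :: "nat \<Rightarrow> nat" by simp
  have sh: "sorted_wrt (<) (map (\<lambda>i::nat. 2*i+1) [0..<f])"
    by (simp add: sorted_wrt_map)
  from assms(2) have rs: "row_standard (tab_act (t_nu n f) d)" and fc: "first_col_increasing (tab_act (t_nu n f) d)"
    by (auto simp: D_nu_def)
  have r1: "sorted_wrt (<) (map d [2*f+1..<n+1])" using rs
    unfolding row_standard_def tab_act_def t_nu_def by (simp del: upt_Suc)
  have r2: "d (2*i+1) < d (2*i+2)" if "i < f" for i using rs that
    unfolding row_standard_def tab_act_def t_nu_def by (auto simp del: upt_Suc)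
  have r1': "sorted_wrt (<) (map d' [2*f+1..<n+1])" by (rule st[OF r1 sorted_wrt_upt])
  have r2': "d' (2*i+1) < d' (2*i+2)" if "i < f" for i using tr[OF _ r2[OF that]] by simp
  have "row_standard (tab_act (t_nu n f) d')"
    unfolding row_standard_def tab_act_def t_nu_def
    using r1' r2' by (auto simp del: upt_Suc)
  moreover have "first_col_increasing (tab_act (t_nu n f) d')"
    using fc unfolding first_col_increasing_def tab_act_def t_nu_def fst_conv hd1
    using st sh by blast
  ultimately show ?thesis using assms(5) by (simp add: D_nu_def)
qed

end
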